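(* Suppose Assumption 1 holds, and suppose expert knowledge gives $\rho(x)\ge\tilde\rho_L(x)$ for a pre-specified function $\tilde\rho_L$. Let $\bar\rho(x)=\max\{\tilde\rho_L(x),\rho_L(x)\}$. Then the sharp upper bound on $\mathrm{THR}(x)$ is $$\overline{\mathrm{THR}}_U(x)=\max\Big\{\mu_0(x)\{1-\mu_1(x)\}-\bar\rho(x)\sqrt{\mu_0(x)\{1-\mu_0(x)\}\mu_1(x)\{1-\mu_1(x)\}},\ 0\Big\}.$$ Moreover, $\overline{\mathrm{THR}}_U(x)$ is not greater than the Fréchet–Hoeffding upper bound $\min\{\mu_0(x),1-\mu_1(x)\}$ that holds under Assumption 1 alone.
   Context: Setting. Tuples $\{X,A,Y(1),Y(0)\}$ are drawn from a superpopulation, with binary treatment $A$ and binary potential outcomes $Y(a)\in\{0,1\}$. The observed outcome is $Y=AY(1)+(1-A)Y(0)$. Assumption 1: (i) $\{Y(0),Y(1)\}\perp\!\!\!\perp A\mid X$; (ii) $\epsilon<\mathbb{P}(A=1\mid X=x)<1-\epsilon$ for all $x$, for some constant $0<\epsilon<1/2$. Notation: - $\mu_a(x)=\mathbb{E}(Y\mid A=a,X=x)$. - $\mathrm{THR}(x)=\mathbb{P}(Y(0)=1,Y(1)=0\mid X=x)$. - $\rho(x)=\mathrm{Corr}(Y(0),Y(1)\mid X=x)$, defined where $0<\mu_a(x)<1$. - $\rho_L(x)=-\min\{\{1-\mu_0(x)\}\{1-\mu_1(x)\},\mu_0(x)\mu_1(x)\}\big/\sqrt{\mu_0(x)\{1-\mu_0(x)\}\mu_1(x)\{1-\mu_1(x)\}}$.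 "Sharp upper bound" means: $\mathrm{THR}(x)\le\overline{\mathrm{THR}}_U(x)$ for every joint distribution of potential outcomes compatible with the observed data, Assumption 1, and the constraint $\rho(x)\ge\tilde\rho_L(x)$; and this value is attained by some such distribution. *)

theory Defs
  imports "HOL-Probability.Probability_Mass_Function"
begin

text \<open>Conditional law, given X = x, of the triple (A, Y(0), Y(1)); True encodes 1.\<close>
type_synonym law = "(bool \<times> bool \<times> bool) pmf"

definition PrA :: "law \<Rightarrow> bool \<Rightarrow> real" where
  "PrA q a = measure_pmf.prob q {(a', y0, y1). a' = a}"

definition Yobs :: "bool \<times> bool \<times> bool \<Rightarrow> bool" where
  "Yobs z = (case z of (a, y0, y1) \<Rightarrow> if a then y1 else y0)"

definition mu :: "law \<Rightarrow> bool \<Rightarrow> real" where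
  "mu q a = measure_pmf.prob q {z. fst z = a \<and> Yobs z} / PrA q a"

definition obs :: "law \<Rightarrow> (bool \<times> bool) pmf" where
  "obs q = map_pmf (\<lambda>z. (fst z, Yobs z)) q"

definition THR :: "law \<Rightarrow> real" where
  "THR q = measure_pmf.prob q {(a, y0, y1). y0 \<and> \<not> y1}"

definition PY0 :: "law \<Rightarrow> real" where
  "PY0 q = measure_pmf.prob q {(a, y0, y1). y0}"
definition PY1 :: "law \<Rightarrow> real" where
  "PY1 q = measure_pmf.prob q {(a, y0, y1). y1}"

definition corr :: "law \<Rightarrow> real" where
  "corr q = (measure_pmf.prob q {(a, y0, y1). y0 \<and> y1} - PY0 q * PY1 q)
            / sqrt (PY0 q * (1 - PY0 q) * PY1 q * (1 - PY1 q))"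

definition assumption1 :: "real \<Rightarrow> ('x \<Rightarrow> law) \<Rightarrow> bool" where
  "assumption1 eps K \<longleftrightarrow>
     (\<forall>x a b c. measure_pmf.prob (K x) {(a, b, c)}
                 = measure_pmf.prob (K x) {z. fst z = a} * measure_pmf.prob (K x) {z. snd z = (b, c)})
   \<and> (\<forall>x. eps < PrA (K x) True \<and> PrA (K x) True < 1 - eps)"

definition rhoL :: "real \<Rightarrow> real \<Rightarrow> real" where
  "rhoL m0 m1 = - min ((1 - m0) * (1 - m1)) (m0 * m1)
                 / sqrt (m0 * (1 - m0) * m1 * (1 - m1))"

definition THR_U :: "real \<Rightarrow> real \<Rightarrow> real \<Rightarrow> real" where
  "THR_U m0 m1 rt = max (m0 * (1 - m1) - max rt (rhoL m0 m1) * sqrt (m0 * (1 - m0) * m1 * (1 - m1))) 0"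

definition compatible :: "real \<Rightarrow> ('x \<Rightarrow> real) \<Rightarrow> ('x \<Rightarrow> law) \<Rightarrow> ('x \<Rightarrow> law) \<Rightarrow> bool" where
  "compatible eps rt K K' \<longleftrightarrow>
     (\<forall>x. obs (K' x) = obs (K x)) \<and> assumption1 eps K' \<and> (\<forall>x. rt x \<le> corr (K' x))"

end

theory Submission
  imports Defs
begin

lemma UNIV3: "(UNIV::(bool\<times>bool\<times>bool) set) = {(False,False,False),(False,False,True),(False,True,False),(False,True,True),(True,False,False),(True,False,True),(True,True,False),(True,True,True)}"
  by auto

lemma prob8: "measure_pmf.prob q S =
  (if (False,False,False) \<in> S then pmf q (False,False,False) else 0) +
  (if (False,False,True) \<in> S then pmf q (False,False,True) else 0) +
  (if (False,True,False) \<in> S then pmf q (False,True,False) else 0) +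
  (if (False,True,True) \<in> S then pmf q (False,True,True) else 0) +
  (if (True,False,False) \<in> S then pmf q (True,False,False) else 0) +
  (if (True,False,True) \<in> S then pmf q (True,False,True) else 0) +
  (if (True,True,False) \<in> S then pmf q (True,True,False) else 0) +
  (if (True,True,True) \<in> S then pmf q (True,True,True) else 0)"
proof -
  have "measure_pmf.prob q S = sum (pmf q) (UNIV \<inter> S)"
    by (simp add: measure_measure_pmf_finite)
  also have "\<dots> = (\<Sum>z\<in>UNIV. if z \<in> S then pmf q z else 0)"
    by (rule sum.inter_restrict) simp
  finally show ?thesis unfolding UNIV3 by (simp add: add.assoc)
qed

lemma sum8: "pmf q (False,False,False) + pmf q (False,False,True) + pmf q (False,True,False) + pmf q (False,True,True)
  + pmf q (True,False,False) + pmf q (True,False,True) + pmf q (True,True,False) + pmf q (True,True,True) = 1"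
  using prob8[of q UNIV] by simp

lemma PrA_exp: "PrA q a = pmf q (a,False,False) + pmf q (a,False,True) + pmf q (a,True,False) + pmf q (a,True,True)"
  unfolding PrA_def prob8 by (cases a) auto

lemma PY0_exp: "PY0 q = pmf q (False,True,False) + pmf q (False,True,True) + pmf q (True,True,False) + pmf q (True,True,True)"
  unfolding PY0_def prob8 by auto
lemma PY1_exp: "PY1 q = pmf q (False,False,True) + pmf q (False,True,True) + pmf q (True,False,True) + pmf q (True,True,True)"
  unfolding PY1_def prob8 by auto
lemma THR_exp: "THR q = pmf q (False,True,False) + pmf q (True,True,False)"
  unfolding THR_def prob8 by auto
lemma P11_exp: "measure_pmf.prob q {(a, y0, y1). y0 \<and> y1} = pmf q (False,True,True) + pmf q (True,True,True)"
  unfolding prob8 by auto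
lemma mu_exp: "mu q a = (if a then pmf q (True,False,True) + pmf q (True,True,True)
   else pmf q (False,True,False) + pmf q (False,True,True)) / PrA q a"
  unfolding mu_def prob8 by (cases a) (auto simp: Yobs_def)

lemma obs_exp: "pmf (obs q) (a, y) = (if a then (if y then pmf q (True,False,True) + pmf q (True,True,True)
     else pmf q (True,False,False) + pmf q (True,True,False))
   else (if y then pmf q (False,True,False) + pmf q (False,True,True)
     else pmf q (False,False,False) + pmf q (False,False,True)))"
  unfolding obs_def pmf_map prob8 by (cases a; cases y) (auto simp: Yobs_def)

definition indep :: "law \<Rightarrow> bool" where
  "indep q \<longleftrightarrow> (\<forall>a b c. pmf q (a,b,c) = PrA q a * (pmf q (False,b,c) + pmf q (True,b,c)))"

lemma indep_iff: "indep q \<longleftrightarrow> (\<forall>a b c. measure_pmf.prob q {(a, b, c)}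
     = measure_pmf.prob q {z. fst z = a} * measure_pmf.prob q {z. snd z = (b, c)})"
proof -
  have 1: "measure_pmf.prob q {z. fst z = a} = PrA q a" for a
    unfolding PrA_exp prob8 by (cases a) auto
  have 2: "measure_pmf.prob q {z. snd z = (b,c)} = pmf q (False,b,c) + pmf q (True,b,c)" for b c
    unfolding prob8 by (cases b; cases c) auto
  show ?thesis unfolding indep_def 1 2 by (simp add: measure_pmf_single)
qed


lemma PrA_obs: "PrA q a = pmf (obs q) (a,True) + pmf (obs q) (a,False)"
  unfolding PrA_exp obs_exp by (cases a) auto

lemma mu_obs: "mu q a = pmf (obs q) (a,True) / PrA q a"
  unfolding mu_exp obs_exp by (cases a) auto

lemma obs_mu: assumes "0 < PrA q a"
  shows "pmf (obs q) (a,y) = PrA q a * (if y then mu q a else 1 - mu q a)"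
proof -
  have "mu q a * PrA q a = pmf (obs q) (a,True)" using assms by (simp add: mu_obs)
  then show ?thesis using PrA_obs[of q a] by (cases y) (auto simp: algebra_simps)
qed

lemma PrA_False: "PrA q False = 1 - PrA q True"
  using sum8[of q] unfolding PrA_exp by simp

lemma mu_indep: assumes "indep q" "0 < PrA q True" "PrA q True < 1"
  shows "mu q True = PY1 q" "mu q False = PY0 q"
proof -
  have pf: "0 < PrA q False" using assms PrA_False[of q] by simp
  note i = assms(1)[unfolded indep_def, rule_format]
  show "mu q True = PY1 q" unfolding mu_exp PY1_exp
    using assms(2) i[of True False True] i[of True True True] by (simp add: field_simps)
  show "mu q False = PY0 q" unfolding mu_exp PY0_exp
    using pf i[of False True False] i[of False True True] by (simp add: field_simps)
qed

lemma s_pos: assumes "0 < m0" "m0 < 1" "0 < m1" "m1 < 1"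
  shows "0 < sqrt (m0 * (1 - m0) * m1 * (1 - m1))"
  using assms by simp

lemma rhoL_s: assumes "0 < m0" "m0 < 1" "0 < m1" "m1 < 1"
  shows "rhoL m0 m1 * sqrt (m0 * (1 - m0) * m1 * (1 - m1)) = - min ((1 - m0) * (1 - m1)) (m0 * m1)"
  using s_pos[OF assms] assms unfolding rhoL_def by simp

lemma upper_real:
  fixes w00 w01 w10 w11 m0 m1 rt :: real
  assumes "0 \<le> w00" "0 \<le> w01" "0 \<le> w10" "0 \<le> w11" "w00 + w01 + w10 + w11 = 1"
    "m0 = w10 + w11" "m1 = w01 + w11" "0 < m0" "m0 < 1" "0 < m1" "m1 < 1"
    "rt \<le> (w11 - m0 * m1) / sqrt (m0 * (1 - m0) * m1 * (1 - m1))"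
  shows "w10 \<le> THR_U m0 m1 rt" "w10 \<le> m0 * (1 - m1) - rt * sqrt (m0 * (1 - m0) * m1 * (1 - m1))"
proof -
  define s where "s = sqrt (m0 * (1 - m0) * m1 * (1 - m1))"
  have s: "0 < s" unfolding s_def using s_pos assms by blast
  have r: "rhoL m0 m1 * s = - min ((1 - m0) * (1 - m1)) (m0 * m1)" unfolding s_def using rhoL_s assms by blast
  have "rt * s \<le> w11 - m0 * m1" using assms(12) s unfolding s_def[symmetric] by (simp add: pos_le_divide_eq)
  then have a: "w10 \<le> m0 * (1 - m1) - rt * s" using assms by (simp add: algebra_simps)
  then show "w10 \<le> m0 * (1 - m1) - rt * s" .
  have b: "w10 \<le> m0 * (1 - m1) - rhoL m0 m1 * s" unfolding r using assms
    by (auto simp: min_def algebra_simps)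
  show "w10 \<le> THR_U m0 m1 rt" unfolding THR_U_def s_def[symmetric]
    using a b by (auto simp: max_def)
qed

lemma THR_U_le: assumes "0 < m0" "m0 < 1" "0 < m1" "m1 < 1"
  shows "THR_U m0 m1 rt \<le> min m0 (1 - m1)"
proof -
  define s where "s = sqrt (m0 * (1 - m0) * m1 * (1 - m1))"
  have s: "0 < s" unfolding s_def using s_pos assms by blast
  have r: "rhoL m0 m1 * s = - min ((1 - m0) * (1 - m1)) (m0 * m1)" unfolding s_def using rhoL_s assms by blast
  have "max rt (rhoL m0 m1) * s \<ge> rhoL m0 m1 * s" using s by (simp add: mult_right_mono)
  then show ?thesis unfolding THR_U_def s_def[symmetric] r using assms
    by (auto simp: min_def max_def algebra_simps split: if_splits)
qed

lemma upper_law: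
  assumes "indep q" "0 < PrA q True" "PrA q True < 1"
    "0 < mu q False" "mu q False < 1" "0 < mu q True" "mu q True < 1" "rt \<le> corr q"
  shows "THR q \<le> THR_U (mu q False) (mu q True) rt"
    "THR q \<le> mu q False * (1 - mu q True) - rt * sqrt (mu q False * (1 - mu q False) * mu q True * (1 - mu q True))"
  using upper_real[of "pmf q (False,False,False) + pmf q (True,False,False)"
     "pmf q (False,False,True) + pmf q (True,False,True)"
     "pmf q (False,True,False) + pmf q (True,True,False)"
     "pmf q (False,True,True) + pmf q (True,True,True)" "mu q False" "mu q True" rt]
    assms sum8[of q] mu_indep[OF assms(1-3)]
  unfolding THR_exp corr_def P11_exp PY0_exp PY1_exp
  by (auto simp: algebra_simps)


lemma construct:
  fixes p t m0 m1 :: real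
  assumes "0 < p" "p < 1" "0 \<le> t" "t \<le> m0" "t \<le> 1 - m1" "m0 - m1 \<le> t"
  shows "\<exists>Q. indep Q \<and> PrA Q True = p \<and> PY0 Q = m0 \<and> PY1 Q = m1 \<and> THR Q = t
     \<and> measure_pmf.prob Q {(a, y0, y1). y0 \<and> y1} = m0 - t"
proof -
  define f :: "bool \<times> bool \<times> bool \<Rightarrow> real" where "f z = (case z of (a,b,c) \<Rightarrow> (if a then p else 1-p) *
     (if b then (if c then m0 - t else t) else (if c then m1 - m0 + t else 1 - m1 - t)))" for z
  have nn: "0 \<le> f z" for z using assms unfolding f_def by (auto split: prod.splits)
  have "(\<integral>\<^sup>+ x. ennreal (f x) \<partial>count_space UNIV) = ennreal (sum f UNIV)"
    by (simp add: nn_integral_count_space_finite nn)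
  also have "sum f UNIV = 1" unfolding UNIV3 f_def by (simp add: algebra_simps)
  finally have "pmf (embed_pmf f) z = f z" for z using nn pmf_embed_pmf[of f] by simp
  then have pf: "pmf (embed_pmf f) = f" by auto
  define Q where "Q = embed_pmf f"
  have pa: "PrA Q a = (if a then p else 1 - p)" for a
    unfolding PrA_exp Q_def pf f_def by (auto simp: algebra_simps)
  have "indep Q" unfolding indep_def pa unfolding Q_def pf f_def by (auto simp: algebra_simps)
  moreover have "PrA Q True = p" using pa by simp
  moreover have "PY0 Q = m0" unfolding PY0_exp Q_def pf f_def by (simp add: algebra_simps)
  moreover have "PY1 Q = m1" unfolding PY1_exp Q_def pf f_def by (simp add: algebra_simps)
  moreover have "THR Q = t" unfolding THR_exp Q_def pf f_def by (simp add: algebra_simps)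
  moreover have "measure_pmf.prob Q {(a, y0, y1). y0 \<and> y1} = m0 - t"
    unfolding P11_exp Q_def pf f_def by (simp add: algebra_simps)
  ultimately show ?thesis by blast
qed


theorem proposition1:
  fixes K :: "'x \<Rightarrow> law" and eps :: real and rt :: "'x \<Rightarrow> real"
  assumes "0 < eps" and "eps < 1/2"
    and "assumption1 eps K"
    and "\<forall>x a. 0 < mu (K x) a \<and> mu (K x) a < 1"
    and "\<forall>x. rt x \<le> corr (K x)"
  shows "\<forall>x.
     (\<forall>K'. compatible eps rt K K' \<longrightarrow>
             THR (K' x) \<le> THR_U (mu (K x) False) (mu (K x) True) (rt x))
   \<and> (\<exists>K'. compatible eps rt K K' \<and>
             THR (K' x) = THR_U (mu (K x) False) (mu (K x) True) (rt x))
   \<and> THR_U (mu (K x) False) (mu (K x) True) (rt x) \<le> min (mu (K x) False) (1 - mu (K x) True)"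
proof (intro allI conjI)
  fix x
  define q where "q = K x"
  define m0 where "m0 = mu q False"
  define m1 where "m1 = mu q True"
  define s where "s = sqrt (m0 * (1 - m0) * m1 * (1 - m1))"
  have m: "0 < m0" "m0 < 1" "0 < m1" "m1 < 1" using assms(4) unfolding m0_def m1_def q_def by auto
  have s: "0 < s" unfolding s_def using s_pos m by blast
  have r: "rhoL m0 m1 * s = - min ((1 - m0) * (1 - m1)) (m0 * m1)" unfolding s_def using rhoL_s m by blast
  have A1: "indep (L y) \<and> 0 < PrA (L y) True \<and> PrA (L y) True < 1" if "assumption1 eps L" for L :: "'x \<Rightarrow> law" and y
  proof -
    have "eps < PrA (L y) True \<and> PrA (L y) True < 1 - eps" using that unfolding assumption1_def by blast
    moreover have "indep (L y)" using that unfolding assumption1_def indep_iff by blast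
    ultimately show ?thesis using assms(1,2) by auto
  qed
  have iq: "indep q" "0 < PrA q True" "PrA q True < 1" using A1[OF assms(3)] unfolding q_def by auto
  show "THR_U (mu (K x) False) (mu (K x) True) (rt x) \<le> min (mu (K x) False) (1 - mu (K x) True)"
    using THR_U_le m unfolding m0_def m1_def q_def by blast
  have ub: "THR (K' x) \<le> THR_U m0 m1 (rt x)" if c: "compatible eps rt K K'" for K'
  proof -
    have o: "obs (K' x) = obs q" using c unfolding compatible_def q_def by auto
    have pa: "PrA (K' x) a = PrA q a" for a using o by (simp add: PrA_obs)
    have mu: "mu (K' x) a = mu q a" for a using o pa by (simp add: mu_obs)
    have i: "indep (K' x)" "0 < PrA (K' x) True" "PrA (K' x) True < 1" using A1 c unfolding compatible_def by auto
    have "rt x \<le> corr (K' x)" using c unfolding compatible_def by auto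
    then show ?thesis using upper_law(1)[OF i] m unfolding mu m0_def m1_def by auto
  qed
  then show "compatible eps rt K K' \<longrightarrow> THR (K' x) \<le> THR_U (mu (K x) False) (mu (K x) True) (rt x)" for K'

    unfolding m0_def m1_def q_def by blast
  define t where "t = THR_U m0 m1 (rt x)"
  have cK: "compatible eps rt K K" unfolding compatible_def using assms by auto
  have ulq: "THR q \<le> m0 * (1 - m1) - rt x * s"
    using upper_law(2)[OF iq] m assms(5) unfolding m0_def m1_def s_def q_def by auto
  have tq: "THR q \<le> t" using ub[OF cK] unfolding t_def q_def by simp
  have py: "PY0 q = m0" "PY1 q = m1" using mu_indep[OF iq] unfolding m0_def m1_def by auto
  have "m0 - m1 \<le> THR q" "0 \<le> THR q" using py unfolding PY0_exp PY1_exp THR_exp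
    by (auto simp: algebra_simps)
  then have t1: "m0 - m1 \<le> t" "0 \<le> t" using tq by auto
  have t2: "t \<le> m0" "t \<le> 1 - m1" using THR_U_le[OF m] unfolding t_def by auto
  have "0 \<le> m0 * (1 - m1) - rt x * s" using ulq \<open>0 \<le> THR q\<close> by linarith
  moreover have "0 \<le> m0 * (1 - m1) - rhoL m0 m1 * s" unfolding r using m
    by (auto simp: min_def algebra_simps)
  ultimately have teq: "t = m0 * (1 - m1) - max (rt x) (rhoL m0 m1) * s"
    unfolding t_def THR_U_def s_def[symmetric] by (auto simp: max_def)
  obtain Q where Q: "indep Q" "PrA Q True = PrA q True" "PY0 Q = m0" "PY1 Q = m1" "THR Q = t"
     "measure_pmf.prob Q {(a, y0, y1). y0 \<and> y1} = m0 - t"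
    using construct[of "PrA q True" t m0 m1] iq t1 t2 by blast
  have iQ: "0 < PrA Q True" "PrA Q True < 1" using Q iq by auto
  have paQ: "PrA Q a = PrA q a" for a using Q(2) PrA_False[of Q] PrA_False[of q] by (cases a) auto
  have muQ: "mu Q a = mu q a" for a using mu_indep[OF Q(1) iQ] Q py mu_indep[OF iq] by (cases a) auto
  have paq: "0 < PrA q a" for a using iq PrA_False[of q] by (cases a) auto
  have oQ: "obs Q = obs q"
  proof (rule pmf_eqI)
    fix z :: "bool \<times> bool" 
    obtain a y where z: "z = (a, y)" by (cases z)
    show "pmf (obs Q) z = pmf (obs q) z" unfolding z
      using obs_mu[of Q a y] obs_mu[of q a y] paQ muQ paq by simp
  qed
  have cQ: "corr Q = max (rt x) (rhoL m0 m1)"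
    unfolding corr_def Q(3,4,6) s_def[symmetric] teq using s by (simp add: algebra_simps)
  define K' where "K' = K(x := Q)"
  have "compatible eps rt K K'"
    unfolding compatible_def
  proof (intro conjI allI)
    fix y show "obs (K' y) = obs (K y)" unfolding K'_def using oQ q_def by auto
  next
    fix y show "rt y \<le> corr (K' y)" unfolding K'_def using cQ assms(5) by auto
  next
    show "assumption1 eps K'" unfolding assumption1_def indep_iff[symmetric]
    proof (rule conjI)
      show "\<forall>y. indep (K' y)" unfolding K'_def using Q(1) A1[OF assms(3)] by auto
    next
      show "\<forall>y. eps < PrA (K' y) True \<and> PrA (K' y) True < 1 - eps"
        unfolding K'_def using Q(2) assms(3) unfolding assumption1_def q_def by auto
    qed
  qed
  moreover have "THR (K' x) = t" unfolding K'_def using Q by simp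
  ultimately show "\<exists>K'. compatible eps rt K K' \<and> THR (K' x) = THR_U (mu (K x) False) (mu (K x) True) (rt x)"
    unfolding t_def m0_def m1_def q_def by blast
qed

end
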